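(* Let $D\in\mathbb S^d$, $\hat\Sigma\in\mathbb S^d_+$, $\gamma\in\mathbb R_+$ and $$J^\star=\sup_{\Sigma\succeq0}\ \langle D,\Sigma\rangle-\gamma\,\mathrm{Tr}\big[\Sigma-2(\hat\Sigma^{1/2}\Sigma\hat\Sigma^{1/2})^{1/2}\big].$$ Then $J^\star=\gamma^2\langle(\gamma I_d-D)^{-1},\hat\Sigma\rangle$ if $\gamma>\lambda_{\max}(D)$; $J^\star=\liminf_{\bar\gamma\downarrow\gamma}\bar\gamma^2\langle(\bar\gamma I_d-D)^{-1},\hat\Sigma\rangle$ if $\gamma=\lambda_{\max}(D)$; and $J^\star=+\infty$ if $\gamma<\lambda_{\max}(D)$. Moreover, if $\gamma>\lambda_{\max}(D)$, the supremum is attained at $\Sigma^\star=\gamma^2(\gamma I_d-D)^{-1}\hat\Sigma(\gamma I_d-D)^{-1}$, and this maximizer is unique if $\hat\Sigma\succ0$.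
   Context: $\langle A,B\rangle=\mathrm{Tr}[A^\top B]$; $\mathbb S^d$ symmetric matrices, $\mathbb S^d_+$ positive semidefinite ones; $\lambda_{\max}$ the largest eigenvalue; $A^{1/2}$ the positive semidefinite square root. *)

theory Defs
  imports "HOL-Analysis.Analysis" "HOL-Library.Extended_Real"
begin

definition symmetric_mat :: "real^'n^'n \<Rightarrow> bool" where
  "symmetric_mat A \<longleftrightarrow> transpose A = A"

definition psd :: "real^'n^'n \<Rightarrow> bool" where
  "psd A \<longleftrightarrow> symmetric_mat A \<and> (\<forall>x. 0 \<le> x \<bullet> (A *v x))"

definition pd :: "real^'n^'n \<Rightarrow> bool" where
  "pd A \<longleftrightarrow> symmetric_mat A \<and> (\<forall>x. x \<noteq> 0 \<longrightarrow> 0 < x \<bullet> (A *v x))"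

definition frob_inner :: "real^'n^'n \<Rightarrow> real^'n^'n \<Rightarrow> real" where
  "frob_inner A B = trace (transpose A ** B)"

definition psd_sqrt :: "real^'n^'n \<Rightarrow> real^'n^'n" where
  "psd_sqrt A = (THE B. psd B \<and> B ** B = A)"

definition eigenvalues :: "real^'n^'n \<Rightarrow> real set" where
  "eigenvalues A = {l. \<exists>v. v \<noteq> 0 \<and> A *v v = l *\<^sub>R v}"

definition lambda_max :: "real^'n^'n \<Rightarrow> real" where
  "lambda_max A = Max (eigenvalues A)"

definition objective :: "real^'n^'n \<Rightarrow> real^'n^'n \<Rightarrow> real \<Rightarrow> real^'n^'n \<Rightarrow> real" where
  "objective D Shat \<gamma> S =
     frob_inner D S
     - \<gamma> * trace (S - 2 *\<^sub>R psd_sqrt (psd_sqrt Shat ** S ** psd_sqrt Shat))"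

definition Jstar :: "real^'n^'n \<Rightarrow> real^'n^'n \<Rightarrow> real \<Rightarrow> ereal" where
  "Jstar D Shat \<gamma> = (SUP S\<in>{S. psd S}. ereal (objective D Shat \<gamma> S))"

definition closed_form :: "real^'n^'n \<Rightarrow> real^'n^'n \<Rightarrow> real \<Rightarrow> real" where
  "closed_form D Shat g = g\<^sup>2 * frob_inner (matrix_inv (g *\<^sub>R mat 1 - D)) Shat"

end

theory Submission
  imports Defs
begin

lemma sym_dot:
  fixes A :: "real^'n^'n"
  assumes "symmetric_mat A"
  shows "x \<bullet> (A *v y) = (A *v x) \<bullet> y"
proof -
  have "x \<bullet> (A *v y) = (x v* A) \<bullet> y" by (simp add: dot_lmul_matrix)
  also have "x v* A = transpose A *v x" by simp
  also have "\<dots> = A *v x" using assms by (simp add: symmetric_mat_def)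
  finally show ?thesis .
qed

lemma dot_transpose: "x \<bullet> ((A::real^'n^'n) *v y) = (transpose A *v x) \<bullet> y"
  by (simp add: dot_lmul_matrix)

lemma vec_eq_by_inner: "(\<And>y. (a::real^'n) \<bullet> y = b \<bullet> y) \<Longrightarrow> a = b"
  by (metis inner_diff_left inner_eq_zero_iff right_minus_eq)

lemma symmetric_by_form:
  fixes M :: "real^'n^'n"
  assumes "\<And>x y. x \<bullet> (M *v y) = (M *v x) \<bullet> y"
  shows "symmetric_mat M"
proof -
  have "transpose M *v x = M *v x" for x
    by (rule vec_eq_by_inner) (metis assms dot_transpose)
  then show ?thesis unfolding symmetric_mat_def by (simp add: matrix_eq)
qed

lemma max_quadratic_eigen:
  fixes A :: "real^'n^'n"
  assumes sym: "symmetric_mat A" and V: "subspace V" and inv: "\<And>x. x \<in> V \<Longrightarrow> A *v x \<in> V"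
    and vV: "v \<in> V" and nv: "norm v = 1"
    and mx: "\<And>x. x \<in> V \<Longrightarrow> norm x = 1 \<Longrightarrow> x \<bullet> (A *v x) \<le> v \<bullet> (A *v v)"
  shows "A *v v = (v \<bullet> (A *v v)) *\<^sub>R v"
proof -
  define l where "l = v \<bullet> (A *v v)"
  have q: "x \<bullet> (A *v x) \<le> l * (x \<bullet> x)" if "x \<in> V" for x
  proof (cases "x = 0")
    case True then show ?thesis by simp
  next
    case False
    let ?y = "(1 / norm x) *\<^sub>R x"
    have "?y \<in> V" using V that by (simp add: subspace_scale)
    moreover have "norm ?y = 1" using False by simp
    ultimately have "?y \<bullet> (A *v ?y) \<le> l" using mx l_def by blast
    moreover have "?y \<bullet> (A *v ?y) = (x \<bullet> (A *v x)) / (norm x)^2"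
      by (simp add: matrix_vector_mult_scaleR inner_scaleR_left inner_scaleR_right power2_eq_square)
    ultimately have "x \<bullet> (A *v x) / (norm x)^2 \<le> l" by simp
    then have "x \<bullet> (A *v x) \<le> l * (norm x)^2" using False
      by (simp add: divide_le_eq)
    then show ?thesis by (simp add: power2_norm_eq_inner)
  qed
  have orth: "w \<bullet> (A *v v) = 0" if wV: "w \<in> V" and wv: "w \<bullet> v = 0" for w
  proof -
    define c where "c = w \<bullet> (A *v v)"
    define d where "d = w \<bullet> (A *v w) - l * (w \<bullet> w)"
    have key: "2 * t * c + t^2 * d \<le> 0" for t
    proof -
      have "v + t *\<^sub>R w \<in> V" using V vV wV by (simp add: subspace_add subspace_scale)
      then have h: "(v + t *\<^sub>R w) \<bullet> (A *v (v + t *\<^sub>R w)) \<le> l * ((v + t *\<^sub>R w) \<bullet> (v + t *\<^sub>R w))"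
        by (rule q)
      have vv: "v \<bullet> v = 1" using nv by (simp add: norm_eq_1)
      have s: "v \<bullet> (A *v w) = c" using sym_dot[OF sym, of v w] c_def by (simp add: inner_commute)
      have "(v + t *\<^sub>R w) \<bullet> (A *v (v + t *\<^sub>R w)) = l + 2 * t * c + t^2 * (w \<bullet> (A *v w))"
        using s by (simp add: matrix_vector_right_distrib matrix_vector_mult_scaleR inner_add_left
            inner_add_right l_def c_def power2_eq_square algebra_simps)
      moreover have "(v + t *\<^sub>R w) \<bullet> (v + t *\<^sub>R w) = 1 + t^2 * (w \<bullet> w)"
        using vv wv by (simp add: inner_add_left inner_add_right inner_commute power2_eq_square)
      ultimately show ?thesis using h by (simp add: d_def algebra_simps)
    qed
    have "c = 0"
    proof (rule ccontr)
      assume "c \<noteq> 0"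
      define e where "e = \<bar>d\<bar> + 1"
      define t where "t = c / e"
      have pos: "e > 0" "2 * e + d > 0" by (auto simp: e_def abs_if)
      have "2 * t * c + t^2 * d = (c/e)^2 * (2 * e + d)"
        using pos by (simp add: t_def field_simps power2_eq_square)
      moreover have "(c/e)^2 * (2 * e + d) > 0"
        using \<open>c \<noteq> 0\<close> pos by (intro mult_pos_pos) auto
      ultimately show False using key[of t] by simp
    qed
    then show ?thesis by (simp add: c_def)
  qed
  define u where "u = A *v v - l *\<^sub>R v"
  have uV: "u \<in> V" using V vV inv by (simp add: u_def subspace_diff subspace_scale)
  have uv: "u \<bullet> v = 0"
    using nv by (simp add: u_def l_def inner_diff_left inner_diff_right inner_commute norm_eq_1)
  have "u \<bullet> (A *v v) = 0" by (rule orth[OF uV uv])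
  then have "u \<bullet> u = 0" using uv by (simp add: u_def inner_diff_right)
  then have "u = 0" by simp
  then show ?thesis by (simp add: u_def l_def)
qed

lemma spectral_subspace:
  fixes A :: "real^'n^'n"
  assumes sym: "symmetric_mat A"
  shows "subspace V \<Longrightarrow> (\<And>x. x \<in> V \<Longrightarrow> A *v x \<in> V) \<Longrightarrow>
    \<exists>B. pairwise orthogonal B \<and> (\<forall>v\<in>B. norm v = 1) \<and> B \<subseteq> V \<and> span B = V
        \<and> (\<forall>v\<in>B. \<exists>l. A *v v = l *\<^sub>R v)"
proof (induction "dim V" arbitrary: V rule: less_induct)
  case less
  note V = less.prems(1) and inv = less.prems(2)
  show ?case
  proof (cases "V = {0}")
    case True
    then show ?thesis by (rule_tac x="{}" in exI) auto
  next
    case False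
    then obtain x where xV: "x \<in> V" and x0: "x \<noteq> 0"
      using V subspace_0 by blast
    let ?S = "V \<inter> sphere 0 1"
    have "(1 / norm x) *\<^sub>R x \<in> ?S" using xV x0 V by (simp add: subspace_scale)
    then have Sne: "?S \<noteq> {}" by blast
    have Sc: "compact ?S"
      by (metis Int_commute V closed_subspace compact_Int_closed compact_sphere)
    have cont: "continuous_on ?S (\<lambda>x. x \<bullet> (A *v x))"
      by (intro continuous_intros linear_continuous_on linear_linear[THEN iffD1] matrix_vector_mul_linear)
    obtain v where vS: "v \<in> ?S" and vmax: "\<forall>y\<in>?S. y \<bullet> (A *v y) \<le> v \<bullet> (A *v v)"
      using continuous_attains_sup[OF Sc Sne cont] by blast
    have vV: "v \<in> V" and nv: "norm v = 1" using vS by auto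
    have ev: "A *v v = (v \<bullet> (A *v v)) *\<^sub>R v"
      by (rule max_quadratic_eigen[OF sym V inv vV nv]) (use vmax in auto)
    define V' where "V' = V \<inter> {y. y \<bullet> v = 0}"
    have V'sub: "subspace V'" unfolding V'_def by (intro subspace_inter V subspace_hyperplane2)
    have V'inv: "A *v y \<in> V'" if "y \<in> V'" for y
    proof -
      have "(A *v y) \<bullet> v = y \<bullet> (A *v v)" using sym_dot[OF sym, of y v] by simp
      also have "\<dots> = 0" using that by (subst ev) (simp add: V'_def)
      finally show ?thesis using that inv by (simp add: V'_def)
    qed
    have "v \<notin> V'" using nv by (auto simp: V'_def)
    then have "V' \<subset> V" using vV unfolding V'_def by blast
    then have "dim V' < dim V" using V V'sub by (metis dim_psubset span_eq_iff)
    from less.hyps[OF this V'sub V'inv]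
    obtain B' where B': "pairwise orthogonal B'" "\<forall>v\<in>B'. norm v = 1" "B' \<subseteq> V'" "span B' = V'"
        "\<forall>v\<in>B'. \<exists>l. A *v v = l *\<^sub>R v" by blast
    show ?thesis
    proof (rule exI[of _ "insert v B'"], intro conjI)
      show "pairwise orthogonal (insert v B')"
        using B'(1,3) by (intro pairwise_orthogonal_insert) (auto simp: V'_def orthogonal_def inner_commute)
      show "\<forall>v\<in>insert v B'. norm v = 1" using B'(2) nv by auto
      show "insert v B' \<subseteq> V" using B'(3) vV by (auto simp: V'_def)
      then have "span (insert v B') \<subseteq> V" using V by (simp add: span_minimal)
      moreover have "V \<subseteq> span (insert v B')"
      proof
        fix y assume yV: "y \<in> V"
        have "y - (y \<bullet> v) *\<^sub>R v \<in> V'"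
          using yV vV V nv by (auto simp: V'_def subspace_diff subspace_scale inner_diff_left norm_eq_1)
        then show "y \<in> span (insert v B')" using B'(4) span_breakdown_eq by blast
      qed
      ultimately show "span (insert v B') = V" by blast
      show "\<forall>w\<in>insert v B'. \<exists>l. A *v w = l *\<^sub>R w" using B'(5) ev by blast
    qed
  qed
qed

lemma spectral:
  fixes A :: "real^'n^'n"
  assumes sym: "symmetric_mat A"
  obtains B l where "pairwise orthogonal B" "\<And>v. v\<in>B \<Longrightarrow> norm v = 1" "span B = UNIV"
    "\<And>v. v \<in> B \<Longrightarrow> A *v v = l v *\<^sub>R v" "finite B"
proof -
  obtain B where B: "pairwise orthogonal B" "\<forall>v\<in>B. norm v = 1" "span B = UNIV"
      "\<forall>v\<in>B. \<exists>l. A *v v = l *\<^sub>R v"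
    using spectral_subspace[OF sym, of UNIV] by auto
  then obtain l where "\<forall>v\<in>B. A *v v = l v *\<^sub>R v" by metis
  then show ?thesis using B that pairwise_orthogonal_imp_finite by blast
qed

definition onb :: "(real^'n) set \<Rightarrow> bool" where
  "onb B \<longleftrightarrow> pairwise orthogonal B \<and> (\<forall>v\<in>B. norm v = 1) \<and> span B = UNIV"

lemma onb_finite: "onb B \<Longrightarrow> finite B"
  unfolding onb_def using pairwise_orthogonal_imp_finite by blast

lemma onb_inner: "onb B \<Longrightarrow> v \<in> B \<Longrightarrow> w \<in> B \<Longrightarrow> v \<bullet> w = (if v = w then 1 else 0)"
  unfolding onb_def pairwise_def orthogonal_def by (auto simp: norm_eq_1)

lemma onb_expand: "onb B \<Longrightarrow> (\<Sum>v\<in>B. (x \<bullet> v) *\<^sub>R v) = x"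
  unfolding onb_def by (intro orthonormal_basis_expand) (auto intro: pairwise_orthogonal_imp_finite)

lemma parseval: "onb B \<Longrightarrow> x \<bullet> y = (\<Sum>v\<in>B. (x \<bullet> v) * (y \<bullet> v))"
proof -
  assume B: "onb B"
  have "x \<bullet> y = (\<Sum>v\<in>B. (x \<bullet> v) *\<^sub>R v) \<bullet> y" using onb_expand[OF B] by simp
  also have "\<dots> = (\<Sum>v\<in>B. (x \<bullet> v) * (v \<bullet> y))"
    by (simp add: inner_sum_left)
  also have "\<dots> = (\<Sum>v\<in>B. (x \<bullet> v) * (y \<bullet> v))"
    by (simp add: inner_commute)
  finally show ?thesis .
qed

lemma matrix_diag_axis: "(M::real^'n^'n) $ i $ i = axis i 1 \<bullet> (M *v axis i 1)"
  by (simp add: inner_axis' matrix_vector_mult_basis column_def)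

lemma trace_onb:
  assumes B: "onb B"
  shows "trace (M::real^'n^'n) = (\<Sum>v\<in>B. v \<bullet> (M *v v))"
proof -
  have "trace M = (\<Sum>i\<in>UNIV. axis i 1 \<bullet> (M *v axis i 1))"
    unfolding trace_def by (simp add: matrix_diag_axis)
  also have "\<dots> = (\<Sum>i\<in>UNIV. \<Sum>v\<in>B. (axis i 1 \<bullet> v) * ((M *v axis i 1) \<bullet> v))"
    by (rule sum.cong[OF refl], rule parseval[OF B])
  also have "\<dots> = (\<Sum>v\<in>B. \<Sum>i\<in>UNIV. (axis i 1 \<bullet> v) * ((M *v axis i 1) \<bullet> v))"
    by (rule sum.swap)
  also have "\<dots> = (\<Sum>v\<in>B. v \<bullet> (M *v v))"
  proof (rule sum.cong[OF refl])
    fix v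
    have "(M *v axis i 1) \<bullet> v = (transpose M *v v) $ i" for i
    proof -
      have "(M *v axis i 1) \<bullet> v = v \<bullet> (M *v axis i 1)" by (rule inner_commute)
      also have "\<dots> = (transpose M *v v) \<bullet> axis i 1" by (rule dot_transpose)
      finally show ?thesis by (simp add: inner_axis)
    qed
    moreover have "axis i 1 \<bullet> v = v $ i" for i by (simp add: inner_axis')
    ultimately have "(\<Sum>i\<in>UNIV. (axis i 1 \<bullet> v) * ((M *v axis i 1) \<bullet> v)) = (\<Sum>i\<in>UNIV. v $ i * (transpose M *v v) $ i)"
      by (intro sum.cong) auto
    also have "\<dots> = v \<bullet> (transpose M *v v)" by (simp only: inner_vec_def inner_real_def)
    also have "\<dots> = (M *v v) \<bullet> v" using dot_transpose[of v "transpose M" v] by simp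
    finally show "(\<Sum>i\<in>UNIV. (axis i 1 \<bullet> v) * ((M *v axis i 1) \<bullet> v)) = v \<bullet> (M *v v)"
      by (simp add: inner_commute)
  qed
  finally show ?thesis .
qed

lemma matrix_eq_onb:
  assumes B: "onb B" and eq: "\<And>v. v \<in> B \<Longrightarrow> (M::real^'n^'n) *v v = N *v v"
  shows "M = N"
proof -
  have sub: "subspace {x. (M - N) *v x = 0}"
    by (simp add: subspace_def matrix_vector_right_distrib matrix_vector_mult_scaleR)
  have "B \<subseteq> {x. (M - N) *v x = 0}" using eq by (auto simp: matrix_vector_mult_diff_rdistrib)
  then have "span B \<subseteq> {x. (M - N) *v x = 0}" using sub span_minimal by blast
  then have "\<forall>x. (M - N) *v x = 0" using B by (auto simp: onb_def)
  then show ?thesis by (simp add: matrix_eq matrix_vector_mult_diff_rdistrib)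
qed

definition osum :: "(real^'n) set \<Rightarrow> (real^'n \<Rightarrow> real) \<Rightarrow> real^'n^'n" where
  "osum B c = (\<chi> i j. \<Sum>v\<in>B. c v * v$i * v$j)"

lemma osum_mult: "osum B c *v x = (\<Sum>v\<in>B. (c v * (v \<bullet> x)) *\<^sub>R v)"
proof -
  have "(osum B c *v x) $ i = (\<Sum>v\<in>B. (c v * (v \<bullet> x)) *\<^sub>R v) $ i" for i
  proof -
    have "(osum B c *v x) $ i = (\<Sum>j\<in>UNIV. \<Sum>v\<in>B. c v * v$i * v$j * x$j)"
      unfolding osum_def matrix_vector_mult_def by (simp add: sum_distrib_right)
    also have "\<dots> = (\<Sum>v\<in>B. \<Sum>j\<in>UNIV. c v * v$i * v$j * x$j)" by (rule sum.swap)
    also have "\<dots> = (\<Sum>v\<in>B. (c v * (v \<bullet> x)) * v $ i)"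
      by (simp add: inner_vec_def sum_distrib_left mult_ac)
    also have "\<dots> = (\<Sum>v\<in>B. (c v * (v \<bullet> x)) *\<^sub>R v) $ i"
      by (simp add: sum_component)
    finally show ?thesis .
  qed
  then show ?thesis by (simp add: vec_eq_iff)
qed

lemma osum_form: "x \<bullet> (osum B c *v y) = (\<Sum>v\<in>B. c v * (v \<bullet> x) * (v \<bullet> y))"
  by (simp add: osum_mult inner_sum_right inner_commute mult_ac)

lemma osum_sym: "symmetric_mat (osum B c)"
  by (rule symmetric_by_form) (simp add: osum_form inner_commute mult_ac)

lemma osum_onb:
  assumes B: "onb B" and w: "w \<in> B"
  shows "osum B c *v w = c w *\<^sub>R w"
proof -
  have "osum B c *v w = (\<Sum>v\<in>B. if v = w then c w *\<^sub>R w else 0)"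
    unfolding osum_mult by (rule sum.cong) (auto simp: onb_inner[OF B _ w])
  also have "\<dots> = c w *\<^sub>R w" using onb_finite[OF B] w by simp
  finally show ?thesis .
qed

lemma psd_sym: "psd A \<Longrightarrow> symmetric_mat A" by (simp add: psd_def)

lemma psd_spectral:
  assumes "psd A"
  obtains B l where "onb B" "\<And>v. v \<in> B \<Longrightarrow> A *v v = l v *\<^sub>R v" "\<And>v. v \<in> B \<Longrightarrow> l v \<ge> 0"
proof -
  obtain B l where B: "pairwise orthogonal B" "\<And>v. v\<in>B \<Longrightarrow> norm v = 1" "span B = UNIV"
    "\<And>v. v \<in> B \<Longrightarrow> A *v v = l v *\<^sub>R v"
    using spectral[OF psd_sym[OF assms]] by metis
  have "l v \<ge> 0" if "v \<in> B" for v
  proof -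
    have "0 \<le> v \<bullet> (A *v v)" using assms by (simp add: psd_def)
    also have "\<dots> = l v" using B(2,4)[OF that] by (simp add: norm_eq_1)
    finally show ?thesis .
  qed
  then show ?thesis using B that unfolding onb_def by blast
qed

lemma sym_spectral:
  assumes "symmetric_mat A"
  obtains B l where "onb B" "\<And>v. v \<in> B \<Longrightarrow> A *v v = l v *\<^sub>R v"
  using spectral[OF assms] unfolding onb_def by metis

lemma psd_sqrt_exists:
  assumes "psd A"
  shows "\<exists>R. psd R \<and> R ** R = A"
proof -
  obtain B l where B: "onb B" "\<And>v. v \<in> B \<Longrightarrow> A *v v = l v *\<^sub>R v" "\<And>v. v \<in> B \<Longrightarrow> l v \<ge> 0"
    using psd_spectral[OF assms] by metis
  define R where "R = osum B (\<lambda>v. sqrt (l v))"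
  have "psd R"
    unfolding psd_def R_def
    by (auto simp: osum_sym osum_form B(3) mult.assoc intro!: sum_nonneg)
  moreover have "R ** R = A"
  proof (rule matrix_eq_onb[OF B(1)])
    fix v assume v: "v \<in> B"
    have "(R ** R) *v v = R *v (R *v v)" by (simp add: matrix_vector_mul_assoc)
    also have "\<dots> = (sqrt (l v) * sqrt (l v)) *\<^sub>R v"
      using v B(1) by (simp add: R_def osum_onb matrix_vector_mult_scaleR)
    also have "\<dots> = A *v v" using B(2,3)[OF v] by simp
    finally show "(R ** R) *v v = A *v v" .
  qed
  ultimately show ?thesis by blast
qed

lemma psd_sqrt_unique_aux:
  assumes P: "psd P" and C: "psd C" and eq: "P ** P = C ** C"
  shows "P = C"
proof -
  obtain B l where B: "onb B" "\<And>v. v \<in> B \<Longrightarrow> C *v v = l v *\<^sub>R v" "\<And>v. v \<in> B \<Longrightarrow> l v \<ge> 0"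
    using psd_spectral[OF C] by metis
  show ?thesis
  proof (rule matrix_eq_onb[OF B(1)])
    fix v assume v: "v \<in> B"
    define c where "c = l v"
    have c0: "c \<ge> 0" using B(3)[OF v] c_def by simp
    have PPv: "P *v (P *v v) = (c * c) *\<^sub>R v"
    proof -
      have "P *v (P *v v) = (C ** C) *v v" using eq by (simp add: matrix_vector_mul_assoc)
      also have "\<dots> = C *v (C *v v)" by (simp add: matrix_vector_mul_assoc)
      also have "\<dots> = (c*c) *\<^sub>R v" using B(2)[OF v] by (simp add: c_def matrix_vector_mult_scaleR)
      finally show ?thesis .
    qed
    define y where "y = P *v v - c *\<^sub>R v"
    have Py: "P *v y = - c *\<^sub>R y"
      by (simp add: y_def matrix_vector_mult_diff_distrib matrix_vector_mult_scaleR PPv algebra_simps)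
    have "y = 0"
    proof (cases "c = 0")
      case True
      have "y \<bullet> y = v \<bullet> (P *v (P *v v))"
        using sym_dot[OF psd_sym[OF P], of v "P *v v"] True by (simp add: y_def)
      also have "\<dots> = 0" using PPv True by simp
      finally show ?thesis by simp
    next
      case False
      have "0 \<le> y \<bullet> (P *v y)" using P by (simp add: psd_def)
      also have "\<dots> = - c * (y \<bullet> y)" by (simp add: Py)
      finally have "y \<bullet> y \<le> 0" using False c0
        by (simp add: mult_le_0_iff)
      then show ?thesis by (metis inner_eq_zero_iff inner_ge_zero order_antisym)
    qed
    then show "P *v v = C *v v" using B(2)[OF v] by (simp add: y_def c_def)
  qed
qed

lemma psd_sqrt_props:
  assumes "psd A"
  shows "psd (psd_sqrt A)" "psd_sqrt A ** psd_sqrt A = A"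
proof -
  have "\<exists>!R. psd R \<and> R ** R = A"
    using psd_sqrt_exists[OF assms] psd_sqrt_unique_aux by blast
  then have "psd (psd_sqrt A) \<and> psd_sqrt A ** psd_sqrt A = A"
    unfolding psd_sqrt_def by (rule theI')
  then show "psd (psd_sqrt A)" "psd_sqrt A ** psd_sqrt A = A" by auto
qed

lemma psd_sqrt_eq:
  assumes "psd R" "R ** R = A"
  shows "psd_sqrt A = R"
proof -
  have A: "psd A"
  proof -
    have "x \<bullet> (A *v x) = (R *v x) \<bullet> (R *v x)" for x
      using assms(2) sym_dot[OF psd_sym[OF assms(1)], of x "R *v x"]
      by (metis matrix_vector_mul_assoc)
    moreover have "symmetric_mat A"
      using assms unfolding symmetric_mat_def psd_def by (metis matrix_transpose_mul)
    ultimately show ?thesis by (simp add: psd_def)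
  qed
  show ?thesis using psd_sqrt_unique_aux[OF psd_sqrt_props(1)[OF A] assms(1)] psd_sqrt_props(2)[OF A] assms(2)
    by simp
qed

lemma trace_scaleR: "trace (c *\<^sub>R (A::real^'n^'n)) = c * trace A"
  by (simp add: trace_def sum_distrib_left)

lemma trace_transpose: "trace (transpose (A::real^'n^'n)) = trace A"
  by (simp add: trace_def transpose_def)

lemma frob_sym: "symmetric_mat A \<Longrightarrow> frob_inner A B = trace (A ** B)"
  by (simp add: frob_inner_def symmetric_mat_def)

lemma psd_trace_nonneg: "psd A \<Longrightarrow> trace (A::real^'n^'n) \<ge> 0"
  unfolding trace_def by (intro sum_nonneg) (simp add: matrix_diag_axis psd_def)

lemma psd_form: "psd A \<Longrightarrow> 0 \<le> x \<bullet> (A *v x)" by (simp add: psd_def)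

lemma pd_form: "pd A \<Longrightarrow> x \<noteq> 0 \<Longrightarrow> 0 < x \<bullet> (A *v x)" by (simp add: pd_def)

lemma pd_psd: "pd A \<Longrightarrow> psd A"
  unfolding pd_def psd_def by (metis inner_zero_left less_imp_le order_refl)

lemma pd_invertible:
  assumes "pd (A::real^'n^'n)"
  shows "invertible A"
proof -
  have "\<forall>x. A *v x = 0 \<longrightarrow> x = 0"
    using pd_form[OF assms] by force
  then show ?thesis by (metis matrix_left_invertible_ker invertible_left_inverse)
qed

lemma matrix_inv_props:
  assumes "invertible (A::real^'n^'n)"
  shows "A ** matrix_inv A = mat 1" "matrix_inv A ** A = mat 1"
proof -
  have "A ** matrix_inv A = mat 1 \<and> matrix_inv A ** A = mat 1"
    using assms unfolding invertible_def matrix_inv_def by (rule someI_ex)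
  then show "A ** matrix_inv A = mat 1" "matrix_inv A ** A = mat 1" by auto
qed

lemma matrix_inv_vec:
  assumes "invertible (A::real^'n^'n)"
  shows "A *v (matrix_inv A *v x) = x" "matrix_inv A *v (A *v x) = x"
  using matrix_inv_props[OF assms] by (simp_all add: matrix_vector_mul_assoc)

lemma sym_inv:
  assumes S: "symmetric_mat (A::real^'n^'n)" and I: "invertible A"
  shows "symmetric_mat (matrix_inv A)"
proof -
  let ?M = "matrix_inv A"
  have "transpose ?M ** A = mat 1"
    using matrix_inv_props(1)[OF I] S unfolding symmetric_mat_def
    by (metis matrix_transpose_mul transpose_mat)
  then have "transpose ?M = transpose ?M ** (A ** ?M)"
    using matrix_inv_props(1)[OF I] by simp
  also have "\<dots> = ?M" using \<open>transpose ?M ** A = mat 1\<close> by (simp add: matrix_mul_assoc)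
  finally show ?thesis by (simp add: symmetric_mat_def)
qed

lemma pd_inv_psd:
  assumes P: "pd (A::real^'n^'n)"
  shows "psd (matrix_inv A)"
proof -
  have I: "invertible A" by (rule pd_invertible[OF P])
  have S: "symmetric_mat A" using P by (simp add: pd_def)
  have "0 \<le> x \<bullet> (matrix_inv A *v x)" for x
  proof -
    let ?y = "matrix_inv A *v x"
    have "x \<bullet> ?y = (A *v ?y) \<bullet> ?y" using matrix_inv_vec(1)[OF I] by simp
    also have "\<dots> = ?y \<bullet> (A *v ?y)" by (simp add: inner_commute)
    also have "\<dots> \<ge> 0" using pd_psd[OF P] by (simp add: psd_def)
    finally show ?thesis .
  qed
  then show ?thesis using sym_inv[OF S I] by (simp add: psd_def)
qed

section \<open>Eigen structure of a symmetric matrix\<close>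

lemma eig_form:
  assumes S: "symmetric_mat D" and B: "onb B" and E: "\<And>v. v \<in> B \<Longrightarrow> D *v v = l v *\<^sub>R v"
  shows "x \<bullet> (D *v x) = (\<Sum>v\<in>B. l v * (x \<bullet> v)^2)"
proof -
  have "x \<bullet> (D *v x) = (\<Sum>v\<in>B. (x \<bullet> v) * ((D *v x) \<bullet> v))" by (rule parseval[OF B])
  also have "\<dots> = (\<Sum>v\<in>B. l v * (x \<bullet> v)^2)"
  proof (rule sum.cong[OF refl])
    fix v assume v: "v \<in> B"
    have "(D *v x) \<bullet> v = x \<bullet> (D *v v)" using sym_dot[OF S, of x v] by simp
    also have "\<dots> = l v * (x \<bullet> v)" using E[OF v] by simp
    finally show "(x \<bullet> v) * ((D *v x) \<bullet> v) = l v * (x \<bullet> v)^2" by (simp add: power2_eq_square)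
  qed
  finally show ?thesis .
qed

lemma onb_nonempty: "onb (B::(real^'n) set) \<Longrightarrow> B \<noteq> {}"
proof
  assume "onb B" "B = {}"
  then have "(UNIV::(real^'n) set) = {0}" by (simp add: onb_def)
  moreover have "axis undefined (1::real) \<noteq> (0::real^'n)" by (simp add: axis_eq_0_iff)
  ultimately show False by auto
qed

lemma eigenvalues_eq:
  assumes S: "symmetric_mat D" and B: "onb B" and E: "\<And>v. v \<in> B \<Longrightarrow> D *v v = l v *\<^sub>R v"
  shows "eigenvalues D = l ` B"
proof
  show "l ` B \<subseteq> eigenvalues D"
  proof
    fix m assume "m \<in> l ` B"
    then obtain v where v: "v \<in> B" "m = l v" by auto
    have "v \<noteq> 0" using B v by (auto simp: onb_def)
    then show "m \<in> eigenvalues D" using E v unfolding eigenvalues_def by blast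
  qed
  show "eigenvalues D \<subseteq> l ` B"
  proof
    fix m assume "m \<in> eigenvalues D"
    then obtain w where w: "w \<noteq> 0" "D *v w = m *\<^sub>R w" unfolding eigenvalues_def by blast
    have "\<exists>v\<in>B. w \<bullet> v \<noteq> 0"
    proof (rule ccontr)
      assume "\<not> ?thesis"
      then have "w \<bullet> w = 0" using parseval[OF B, of w w] by simp
      then show False using w by simp
    qed
    then obtain v where v: "v \<in> B" "w \<bullet> v \<noteq> 0" by blast
    have "m * (w \<bullet> v) = (D *v w) \<bullet> v" using w by simp
    also have "\<dots> = w \<bullet> (D *v v)" using sym_dot[OF S, of w v] by simp
    also have "\<dots> = l v * (w \<bullet> v)" using E[OF v(1)] by simp
    finally have "m = l v" using v(2) by simp
    then show "m \<in> l ` B" using v by blast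
  qed
qed

lemma lambda_max_props:
  assumes S: "symmetric_mat D" and B: "onb B" and E: "\<And>v. v \<in> B \<Longrightarrow> D *v v = l v *\<^sub>R v"
  shows "lambda_max D = Max (l ` B)" "\<exists>u\<in>B. l u = lambda_max D" "\<And>v. v \<in> B \<Longrightarrow> l v \<le> lambda_max D"
proof -
  show lm: "lambda_max D = Max (l ` B)" unfolding lambda_max_def using eigenvalues_eq[OF S B E] by simp
  have fin: "finite (l ` B)" and ne: "l ` B \<noteq> {}" using onb_finite[OF B] onb_nonempty[OF B] by auto
  show "\<exists>u\<in>B. l u = lambda_max D" using Max_in[OF fin ne] lm by auto
  show "\<And>v. v \<in> B \<Longrightarrow> l v \<le> lambda_max D" using Max_ge[OF fin] lm by auto
qed

lemma form_le_lambda_max: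
  assumes S: "symmetric_mat D"
  shows "x \<bullet> (D *v x) \<le> lambda_max D * (x \<bullet> x)"
proof -
  obtain B l where B: "onb B" and E: "\<And>v. v \<in> B \<Longrightarrow> D *v v = l v *\<^sub>R v"
    using sym_spectral[OF S] by metis
  have "x \<bullet> (D *v x) = (\<Sum>v\<in>B. l v * (x \<bullet> v)^2)" by (rule eig_form[OF S B E])
  also have "\<dots> \<le> (\<Sum>v\<in>B. lambda_max D * (x \<bullet> v)^2)"
    using lambda_max_props(3)[OF S B E] by (intro sum_mono mult_right_mono) auto
  also have "\<dots> = lambda_max D * (x \<bullet> x)"
    using parseval[OF B, of x x] by (simp add: sum_distrib_left power2_eq_square)
  finally show ?thesis .
qed

lemma shift_mult: "(g *\<^sub>R mat 1 - D) *v x = g *\<^sub>R x - D *v (x::real^'n)"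
proof -
  have "(g *\<^sub>R mat 1 - D) *v x = (g *\<^sub>R mat 1) *v x - D *v x"
    by (rule matrix_vector_mult_diff_rdistrib)
  also have "(g *\<^sub>R mat 1) *v x = g *\<^sub>R (mat 1 *v x)"
    by (rule scaleR_matrix_vector_assoc[symmetric])
  finally show ?thesis by simp
qed

lemma shift_sym:
  fixes D :: "real^'n^'n"
  assumes "symmetric_mat D"
  shows "symmetric_mat (g *\<^sub>R mat 1 - D)"
proof (rule symmetric_by_form)
  fix x y :: "real^'n"
  have "x \<bullet> (D *v y) = (D *v x) \<bullet> y" by (rule sym_dot[OF assms])
  then show "x \<bullet> ((g *\<^sub>R mat 1 - D) *v y) = ((g *\<^sub>R mat 1 - D) *v x) \<bullet> y"
    unfolding shift_mult inner_diff_left inner_diff_right inner_scaleR_left inner_scaleR_right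
    by (simp add: inner_commute)
qed

lemma shift_pd:
  assumes S: "symmetric_mat D" and g: "g > lambda_max D"
  shows "pd (g *\<^sub>R mat 1 - D)"
proof -
  have "0 < x \<bullet> ((g *\<^sub>R mat 1 - D) *v x)" if "x \<noteq> 0" for x
  proof -
    have "x \<bullet> ((g *\<^sub>R mat 1 - D) *v x) = g * (x \<bullet> x) - x \<bullet> (D *v x)"
      by (simp add: shift_mult inner_diff_right)
    moreover have "x \<bullet> (D *v x) \<le> lambda_max D * (x \<bullet> x)" by (rule form_le_lambda_max[OF S])
    moreover have "x \<bullet> x > 0" using that by simp
    moreover have "(g - lambda_max D) * (x \<bullet> x) > 0"
      using g \<open>x \<bullet> x > 0\<close> by (intro mult_pos_pos) auto
    moreover have "(g - lambda_max D) * (x \<bullet> x) = g * (x \<bullet> x) - lambda_max D * (x \<bullet> x)"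
      by (simp add: algebra_simps)
    ultimately show ?thesis by linarith
  qed
  then show ?thesis using shift_sym[OF S] by (simp add: pd_def)
qed

section \<open>Bessel\<close>

lemma bessel:
  assumes K: "finite K" and orth: "\<And>u v. u \<in> K \<Longrightarrow> v \<in> K \<Longrightarrow> y u \<bullet> y v = (if u = v then 1 else 0)"
  shows "(\<Sum>v\<in>K. (y v \<bullet> z)^2) \<le> z \<bullet> (z::real^'n)"
proof -
  define s where "s = (\<Sum>v\<in>K. (z \<bullet> y v) *\<^sub>R y v)"
  have zs: "z \<bullet> s = (\<Sum>v\<in>K. (z \<bullet> y v)^2)"
    by (simp add: s_def inner_sum_right power2_eq_square)
  have ss: "s \<bullet> s = (\<Sum>v\<in>K. (z \<bullet> y v)^2)"
  proof -
    have "s \<bullet> s = (\<Sum>u\<in>K. (z \<bullet> y u) * (y u \<bullet> s))"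
      by (simp add: s_def inner_sum_left)
    also have "\<dots> = (\<Sum>u\<in>K. (z \<bullet> y u)^2)"
    proof (rule sum.cong[OF refl])
      fix u assume u: "u \<in> K"
      have "y u \<bullet> s = (\<Sum>v\<in>K. (z \<bullet> y v) * (y u \<bullet> y v))" by (simp add: s_def inner_sum_right)
      also have "\<dots> = (\<Sum>v\<in>K. if v = u then z \<bullet> y u else 0)"
        by (rule sum.cong[OF refl]) (simp add: orth[OF u])
      also have "\<dots> = z \<bullet> y u" using K u by simp
      finally show "(z \<bullet> y u) * (y u \<bullet> s) = (z \<bullet> y u)^2" by (simp add: power2_eq_square)
    qed
    finally show ?thesis .
  qed
  have "0 \<le> (z - s) \<bullet> (z - s)" by (rule inner_ge_zero)
  also have "\<dots> = z \<bullet> z - 2 * (z \<bullet> s) + s \<bullet> s"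
    unfolding inner_diff_left inner_diff_right inner_commute[of s z] by linarith
  finally have "(\<Sum>v\<in>K. (z \<bullet> y v)^2) \<le> z \<bullet> z" using zs ss by linarith
  moreover have "(\<Sum>v\<in>K. (y v \<bullet> z)^2) = (\<Sum>v\<in>K. (z \<bullet> y v)^2)"
    by (rule sum.cong[OF refl]) (rule arg_cong[where f="\<lambda>t. t^2"], rule inner_commute)
  ultimately show ?thesis by simp
qed

lemma trace_bound_orthonormal:
  assumes P: "psd P" and K: "finite K"
    and orth: "\<And>u v. u \<in> K \<Longrightarrow> v \<in> K \<Longrightarrow> y u \<bullet> y v = (if u = v then 1 else 0)"
  shows "(\<Sum>v\<in>K. y v \<bullet> (P *v y v)) \<le> trace (P::real^'n^'n)"
proof -
  obtain B p where B: "onb B" "\<And>e. e \<in> B \<Longrightarrow> P *v e = p e *\<^sub>R e" "\<And>e. e \<in> B \<Longrightarrow> p e \<ge> 0"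
    using psd_spectral[OF P] by metis
  have "(\<Sum>v\<in>K. y v \<bullet> (P *v y v)) = (\<Sum>v\<in>K. \<Sum>e\<in>B. p e * (y v \<bullet> e)^2)"
    by (rule sum.cong[OF refl], rule eig_form[OF psd_sym[OF P] B(1,2)])
  also have "\<dots> = (\<Sum>e\<in>B. \<Sum>v\<in>K. p e * (y v \<bullet> e)^2)"
    by (rule sum.swap)
  also have "\<dots> = (\<Sum>e\<in>B. p e * (\<Sum>v\<in>K. (y v \<bullet> e)^2))"
    by (simp only: sum_distrib_left)
  also have "\<dots> \<le> (\<Sum>e\<in>B. p e * 1)"
  proof (rule sum_mono)
    fix e assume e: "e \<in> B"
    have "(\<Sum>v\<in>K. (y v \<bullet> e)^2) \<le> e \<bullet> e" by (rule bessel[OF K orth])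
    also have "e \<bullet> e = 1" using B(1) e by (simp add: onb_def norm_eq_1)
    finally show "p e * (\<Sum>v\<in>K. (y v \<bullet> e)^2) \<le> p e * 1" using B(3)[OF e] by (rule mult_left_mono)
  qed
  also have "\<dots> = trace P"
  proof -
    have "trace P = (\<Sum>e\<in>B. e \<bullet> (P *v e))" by (rule trace_onb[OF B(1)])
    also have "\<dots> = (\<Sum>e\<in>B. p e * 1)"
      using B(1,2) by (intro sum.cong) (auto simp: onb_def norm_eq_1)
    finally show ?thesis by simp
  qed
  finally show ?thesis .
qed

lemma mv3: "(A ** B ** C) *v x = A *v (B *v (C *v (x::real^'n)))"
  by (simp add: matrix_vector_mul_assoc matrix_mul_assoc)

lemma scale_mv: "(c *\<^sub>R (A::real^'n^'n)) *v x = c *\<^sub>R (A *v x)"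
  by (rule scaleR_matrix_vector_assoc[symmetric])

lemma psd_congr:
  fixes P C :: "real^'n^'n"
  assumes P: "psd P" and C: "symmetric_mat C"
  shows "psd (C ** P ** C)"
proof -
  have f: "x \<bullet> ((C ** P ** C) *v y) = (C *v x) \<bullet> (P *v (C *v y))" for x y
    unfolding mv3 by (rule sym_dot[OF C])
  have "symmetric_mat (C ** P ** C)"
  proof (rule symmetric_by_form)
    fix x y :: "real^'n"
    have "x \<bullet> ((C ** P ** C) *v y) = (C *v x) \<bullet> (P *v (C *v y))" by (rule f)
    also have "\<dots> = (P *v (C *v x)) \<bullet> (C *v y)" by (rule sym_dot[OF psd_sym[OF P]])
    also have "\<dots> = (C *v (P *v (C *v x))) \<bullet> y"
      using sym_dot[OF C, of "P *v (C *v x)" y] by (simp add: inner_commute)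
    finally show "x \<bullet> ((C ** P ** C) *v y) = ((C ** P ** C) *v x) \<bullet> y" by (simp add: mv3)
  qed
  moreover have "0 \<le> x \<bullet> ((C ** P ** C) *v x)" for x
    unfolding f by (rule psd_form[OF P])
  ultimately show ?thesis by (simp add: psd_def)
qed

lemma psd_scale:
  assumes P: "psd P" and c: "c \<ge> 0"
  shows "psd (c *\<^sub>R P)"
proof -
  have "symmetric_mat (c *\<^sub>R P)"
    using psd_sym[OF P] by (simp add: symmetric_mat_def transpose_scalar)
  moreover have "0 \<le> x \<bullet> ((c *\<^sub>R P) *v x)" for x
    using psd_form[OF P, of x] c by (simp add: scale_mv)
  ultimately show ?thesis by (simp add: psd_def)
qed

lemma exists_onb: "\<exists>B::(real^'n) set. onb B"
proof -
  have "symmetric_mat (0::real^'n^'n)" by (simp add: symmetric_mat_def transpose_def vec_eq_iff)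
  then show ?thesis using sym_spectral by metis
qed

lemma trace_cyc: "trace ((A::real^'n^'n) ** B ** C) = trace (C ** A ** B)"
  by (metis matrix_mul_assoc trace_mul_sym)

lemma trace_shift: "trace ((g *\<^sub>R mat 1 - D) ** (S::real^'n^'n)) = g * trace S - trace (D ** S)"
proof -
  obtain B :: "(real^'n) set" where B: "onb B" using exists_onb by blast
  have "trace ((g *\<^sub>R mat 1 - D) ** S) = (\<Sum>v\<in>B. v \<bullet> (((g *\<^sub>R mat 1 - D) ** S) *v v))"
    by (rule trace_onb[OF B])
  also have "\<dots> = (\<Sum>v\<in>B. g * (v \<bullet> (S *v v)) - v \<bullet> ((D ** S) *v v))"
    by (simp add: shift_mult inner_diff_right matrix_vector_mul_assoc[symmetric])
  also have "\<dots> = g * trace S - trace (D ** S)"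
    by (simp add: trace_onb[OF B] sum_subtractf sum_distrib_left)
  finally show ?thesis .
qed

lemma objective_eq:
  assumes "symmetric_mat D"
  shows "objective D Shat g S = trace (D ** S) - g * trace S
     + 2 * g * trace (psd_sqrt (psd_sqrt Shat ** S ** psd_sqrt Shat))"
  unfolding objective_def frob_sym[OF assms] trace_sub trace_scaleR by (simp add: algebra_simps)

lemma objective_eq2:
  assumes "symmetric_mat D"
  shows "objective D Shat g S = 2 * g * trace (psd_sqrt (psd_sqrt Shat ** S ** psd_sqrt Shat))
     - trace ((g *\<^sub>R mat 1 - D) ** S)"
  unfolding objective_eq[OF assms] trace_shift by simp

lemma closed_form_eq:
  assumes "symmetric_mat D" "invertible (g *\<^sub>R mat 1 - D)"
  shows "closed_form D Shat g = g^2 * trace (matrix_inv (g *\<^sub>R mat 1 - D) ** Shat)"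
  unfolding closed_form_def using frob_sym[OF sym_inv[OF shift_sym[OF assms(1)] assms(2)]] by simp

lemma complete_square:
  assumes A: "pd A"
  shows "2 * g * (a \<bullet> b) \<le> a \<bullet> (A *v a) + g^2 * (b \<bullet> (matrix_inv A *v b))"
proof -
  have I: "invertible A" by (rule pd_invertible[OF A])
  have S: "symmetric_mat A" using A by (simp add: pd_def)
  define c where "c = matrix_inv A *v b"
  have Ac: "A *v c = b" by (simp add: c_def matrix_inv_vec(1)[OF I])
  have "0 \<le> (a - g *\<^sub>R c) \<bullet> (A *v (a - g *\<^sub>R c))" by (rule psd_form[OF pd_psd[OF A]])
  also have "A *v (a - g *\<^sub>R c) = A *v a - g *\<^sub>R b"
    by (simp add: matrix_vector_mult_diff_distrib matrix_vector_mult_scaleR Ac)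
  also have "(a - g *\<^sub>R c) \<bullet> (A *v a - g *\<^sub>R b) = a \<bullet> (A *v a) - g * (a \<bullet> b) - g * (c \<bullet> (A *v a)) + g * g * (c \<bullet> b)"
    by (simp add: inner_diff_left inner_diff_right algebra_simps)
  also have "c \<bullet> (A *v a) = a \<bullet> b"
    using sym_dot[OF S, of c a] Ac by (simp add: inner_commute)
  also have "c \<bullet> b = b \<bullet> (matrix_inv A *v b)" by (simp add: c_def inner_commute)
  finally show ?thesis by (simp add: power2_eq_square algebra_simps)
qed

lemma main_bound:
  fixes Shat S A :: "real^'n^'n"
  assumes Sh: "psd Shat" and S: "psd S" and A: "pd A" and g: "g \<ge> 0"
  shows "2 * g * trace (psd_sqrt (psd_sqrt Shat ** S ** psd_sqrt Shat))
           \<le> trace (A ** S) + g^2 * trace (matrix_inv A ** Shat)"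
proof -
  define R where "R = psd_sqrt Shat"
  define Q where "Q = psd_sqrt S"
  define T where "T = R ** S ** R"
  define X where "X = psd_sqrt T"
  define M where "M = matrix_inv A"
  have R: "psd R" "R ** R = Shat" using psd_sqrt_props[OF Sh] by (auto simp: R_def)
  have Q: "psd Q" "Q ** Q = S" using psd_sqrt_props[OF S] by (auto simp: Q_def)
  have RS: "symmetric_mat R" and QS: "symmetric_mat Q" using R Q by (auto simp: psd_def)
  have T: "psd T" unfolding T_def by (rule psd_congr[OF S RS])
  have X: "psd X" "X ** X = T" using psd_sqrt_props[OF T] by (auto simp: X_def)
  have Mpsd: "psd M" unfolding M_def by (rule pd_inv_psd[OF A])
  obtain BX x where BX: "onb BX" and Xv: "\<And>v. v \<in> BX \<Longrightarrow> X *v v = x v *\<^sub>R v"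
      and x0: "\<And>v. v \<in> BX \<Longrightarrow> x v \<ge> 0"
    using psd_spectral[OF X(1)] by metis
  have finBX: "finite BX" by (rule onb_finite[OF BX])
  define K where "K = {v\<in>BX. x v > 0}"
  have KB: "K \<subseteq> BX" and finK: "finite K" using finBX by (auto simp: K_def)
  define w where "w v = Q *v (R *v v)" for v
  define y where "y v = (1 / x v) *\<^sub>R w v" for v
  have ww: "w u \<bullet> w v = (x v)^2 * (u \<bullet> v)" if v: "v \<in> BX" for u v
  proof -
    have "w u \<bullet> w v = (R *v u) \<bullet> (Q *v (Q *v (R *v v)))"
      unfolding w_def by (rule sym_dot[OF QS, symmetric])
    also have "Q *v (Q *v (R *v v)) = S *v (R *v v)"
      using Q(2) by (metis matrix_vector_mul_assoc)
    also have "(R *v u) \<bullet> (S *v (R *v v)) = u \<bullet> (R *v (S *v (R *v v)))"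
      by (rule sym_dot[OF RS, symmetric])
    also have "R *v (S *v (R *v v)) = X *v (X *v v)"
      using X(2) by (simp add: T_def mv3 matrix_vector_mul_assoc)
    also have "\<dots> = (x v)^2 *\<^sub>R v"
      by (simp add: Xv[OF v] matrix_vector_mult_scaleR power2_eq_square)
    finally show ?thesis by simp
  qed
  have yorth: "y u \<bullet> y v = (if u = v then 1 else 0)" if "u \<in> K" "v \<in> K" for u v
  proof -
    have uv: "u \<in> BX" "v \<in> BX" "x u > 0" "x v > 0" using that by (auto simp: K_def)
    have "y u \<bullet> y v = (1 / x u) * (1 / x v) * ((x v)^2 * (u \<bullet> v))"
      by (simp add: y_def ww[OF uv(2)])
    also have "\<dots> = (if u = v then 1 else 0)"
      using onb_inner[OF BX uv(1,2)] uv(3,4) by (simp add: power2_eq_square)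
    finally show ?thesis .
  qed
  have xv: "x v = (Q *v y v) \<bullet> (R *v v)" if "v \<in> K" for v
  proof -
    have v: "v \<in> BX" "x v > 0" using that by (auto simp: K_def)
    have "(Q *v y v) \<bullet> (R *v v) = y v \<bullet> w v"
      unfolding w_def by (rule sym_dot[OF QS, symmetric])
    also have "\<dots> = (1 / x v) * ((x v)^2 * (v \<bullet> v))" by (simp add: y_def ww[OF v(1)])
    also have "\<dots> = x v" using onb_inner[OF BX v(1) v(1)] v(2) by (simp add: power2_eq_square)
    finally show ?thesis by simp
  qed
  have cs: "2 * g * x v \<le> y v \<bullet> ((Q ** A ** Q) *v y v) + g^2 * (v \<bullet> ((R ** M ** R) *v v))"
    if "v \<in> K" for v
  proof -
    have "2 * g * ((Q *v y v) \<bullet> (R *v v))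
        \<le> (Q *v y v) \<bullet> (A *v (Q *v y v)) + g^2 * ((R *v v) \<bullet> (M *v (R *v v)))"
      unfolding M_def by (rule complete_square[OF A])
    also have "(Q *v y v) \<bullet> (A *v (Q *v y v)) = y v \<bullet> ((Q ** A ** Q) *v y v)"
      unfolding mv3 by (rule sym_dot[OF QS, symmetric])
    also have "(R *v v) \<bullet> (M *v (R *v v)) = v \<bullet> ((R ** M ** R) *v v)"
      unfolding mv3 by (rule sym_dot[OF RS, symmetric])
    finally show ?thesis using xv[OF that] by simp
  qed
  have trX: "trace X = (\<Sum>v\<in>K. x v)"
  proof -
    have "trace X = (\<Sum>v\<in>BX. v \<bullet> (X *v v))" by (rule trace_onb[OF BX])
    also have "\<dots> = (\<Sum>v\<in>BX. x v)"
      by (rule sum.cong[OF refl]) (simp add: Xv onb_inner[OF BX])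
    also have "\<dots> = (\<Sum>v\<in>K. x v)"
      using finBX KB x0 by (intro sum.mono_neutral_right) (auto simp: K_def less_le)
    finally show ?thesis .
  qed
  have b1: "(\<Sum>v\<in>K. y v \<bullet> ((Q ** A ** Q) *v y v)) \<le> trace (A ** S)"
  proof -
    have "(\<Sum>v\<in>K. y v \<bullet> ((Q ** A ** Q) *v y v)) \<le> trace (Q ** A ** Q)"
      by (rule trace_bound_orthonormal[OF psd_congr[OF pd_psd[OF A] QS] finK yorth])
    also have "trace (Q ** A ** Q) = trace (A ** S)"
      using trace_cyc[of Q A Q] Q(2) trace_mul_sym[of S A] by (simp add: matrix_mul_assoc)
    finally show ?thesis .
  qed
  have b2: "(\<Sum>v\<in>K. v \<bullet> ((R ** M ** R) *v v)) \<le> trace (M ** Shat)"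
  proof -
    have "(\<Sum>v\<in>K. v \<bullet> ((R ** M ** R) *v v)) \<le> (\<Sum>v\<in>BX. v \<bullet> ((R ** M ** R) *v v))"
      using finBX KB psd_form[OF psd_congr[OF Mpsd RS]] by (intro sum_mono2) auto
    also have "\<dots> = trace (R ** M ** R)" by (rule trace_onb[OF BX, symmetric])
    also have "trace (R ** M ** R) = trace (M ** Shat)"
      using trace_cyc[of R M R] R(2) trace_mul_sym[of Shat M] by (simp add: matrix_mul_assoc)
    finally show ?thesis .
  qed
  have "2 * g * trace X = (\<Sum>v\<in>K. 2 * g * x v)" by (simp add: trX sum_distrib_left)
  also have "\<dots> \<le> (\<Sum>v\<in>K. y v \<bullet> ((Q ** A ** Q) *v y v) + g^2 * (v \<bullet> ((R ** M ** R) *v v)))"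
    by (rule sum_mono) (rule cs)
  also have "\<dots> = (\<Sum>v\<in>K. y v \<bullet> ((Q ** A ** Q) *v y v)) + g^2 * (\<Sum>v\<in>K. v \<bullet> ((R ** M ** R) *v v))"
    by (simp add: sum.distrib sum_distrib_left)
  also have "\<dots> \<le> trace (A ** S) + g^2 * trace (M ** Shat)"
    using b1 b2 by (intro add_mono mult_left_mono) auto
  finally show ?thesis by (simp add: X_def T_def R_def M_def)
qed

lemma objective_le:
  fixes D Shat S :: "real^'n^'n"
  assumes D: "symmetric_mat D" and Sh: "psd Shat" and S: "psd S"
    and g: "g > lambda_max D" "g \<ge> 0"
  shows "objective D Shat g S \<le> closed_form D Shat g"
proof -
  have A: "pd (g *\<^sub>R mat 1 - D)" by (rule shift_pd[OF D g(1)])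
  have "objective D Shat g S = 2 * g * trace (psd_sqrt (psd_sqrt Shat ** S ** psd_sqrt Shat))
     - trace ((g *\<^sub>R mat 1 - D) ** S)" by (rule objective_eq2[OF D])
  also have "\<dots> \<le> g^2 * trace (matrix_inv (g *\<^sub>R mat 1 - D) ** Shat)"
    using main_bound[OF Sh S A g(2)] by simp
  also have "\<dots> = closed_form D Shat g"
    by (rule closed_form_eq[OF D pd_invertible[OF A], symmetric])
  finally show ?thesis .
qed

lemma attain:
  fixes D Shat :: "real^'n^'n"
  assumes D: "symmetric_mat D" and Sh: "psd Shat" and g: "g > lambda_max D" "g \<ge> 0"
  defines "A \<equiv> g *\<^sub>R mat 1 - D"
  defines "Sstar \<equiv> g\<^sup>2 *\<^sub>R (matrix_inv A ** Shat ** matrix_inv A)"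
  shows "psd Sstar" "objective D Shat g Sstar = closed_form D Shat g"
    "psd_sqrt (psd_sqrt Shat ** Sstar ** psd_sqrt Shat)
       = g *\<^sub>R (psd_sqrt Shat ** matrix_inv A ** psd_sqrt Shat)"
    "trace (matrix_inv A ** Shat) \<ge> 0"
proof -
  have Apd: "pd A" unfolding A_def by (rule shift_pd[OF D g(1)])
  have I: "invertible A" by (rule pd_invertible[OF Apd])
  define M where "M = matrix_inv A"
  define R where "R = psd_sqrt Shat"
  define N where "N = R ** M ** R"
  have R: "psd R" "R ** R = Shat" using psd_sqrt_props[OF Sh] by (auto simp: R_def)
  have RS: "symmetric_mat R" using R by (simp add: psd_def)
  have Mpsd: "psd M" unfolding M_def by (rule pd_inv_psd[OF Apd])
  have MS: "symmetric_mat M" using Mpsd by (simp add: psd_def)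
  have MA: "M ** A = mat 1" unfolding M_def by (rule matrix_inv_props(2)[OF I])
  show "psd Sstar" unfolding Sstar_def M_def[symmetric]
    by (rule psd_scale[OF psd_congr[OF Sh MS]]) simp
  have Npsd: "psd N" unfolding N_def by (rule psd_congr[OF Mpsd RS])
  have TT: "R ** Sstar ** R = (g *\<^sub>R N) ** (g *\<^sub>R N)"
  proof (subst matrix_eq, intro allI)
    fix z
    show "(R ** Sstar ** R) *v z = ((g *\<^sub>R N) ** (g *\<^sub>R N)) *v z"
      unfolding Sstar_def N_def M_def[symmetric] R(2)[symmetric]
      by (simp add: matrix_vector_mul_assoc[symmetric] scale_mv matrix_vector_mult_scaleR power2_eq_square)
  qed
  have gN: "psd (g *\<^sub>R N)" by (rule psd_scale[OF Npsd g(2)])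
  have X: "psd_sqrt (R ** Sstar ** R) = g *\<^sub>R N"
    by (rule psd_sqrt_eq[OF gN TT[symmetric]])
  then show "psd_sqrt (psd_sqrt Shat ** Sstar ** psd_sqrt Shat)
       = g *\<^sub>R (psd_sqrt Shat ** matrix_inv A ** psd_sqrt Shat)"
    by (simp add: R_def N_def M_def)
  have trN: "trace N = trace (M ** Shat)"
    using trace_cyc[of R M R] R(2) trace_mul_sym[of Shat M] by (simp add: N_def matrix_mul_assoc)
  show "trace (matrix_inv A ** Shat) \<ge> 0"
    using psd_trace_nonneg[OF Npsd] trN by (simp add: M_def)
  have trAS: "trace (A ** Sstar) = g^2 * trace (M ** Shat)"
  proof -
    have "A ** Sstar = g^2 *\<^sub>R (A ** (M ** Shat ** M))"
      unfolding Sstar_def M_def by (simp add: matrix_scalar_ac scalar_matrix_assoc[symmetric])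
    moreover have "trace (A ** (M ** Shat ** M)) = trace (M ** Shat)"
    proof -
      have "trace (A ** (M ** Shat ** M)) = trace (M ** Shat ** M ** A)" by (rule trace_mul_sym)
      also have "M ** Shat ** M ** A = M ** Shat" using MA by (simp add: matrix_mul_assoc[symmetric])
      finally show ?thesis .
    qed
    ultimately show ?thesis by (simp add: trace_scaleR)
  qed
  have "objective D Shat g Sstar = 2 * g * trace (g *\<^sub>R N) - trace (A ** Sstar)"
    using objective_eq2[OF D, of Shat g Sstar] X by (simp add: R_def A_def)
  also have "\<dots> = g^2 * trace (M ** Shat)"
    by (simp add: trace_scaleR trN trAS power2_eq_square)
  also have "\<dots> = closed_form D Shat g"
    using closed_form_eq[OF D I[unfolded A_def]] by (simp add: M_def A_def)
  finally show "objective D Shat g Sstar = closed_form D Shat g" .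
qed

lemma Jstar_above:
  fixes D Shat :: "real^'n^'n"
  assumes D: "symmetric_mat D" and Sh: "psd Shat" and g: "g > lambda_max D" "g \<ge> 0"
  shows "Jstar D Shat g = ereal (closed_form D Shat g)"
proof (rule antisym)
  show "Jstar D Shat g \<le> ereal (closed_form D Shat g)"
    unfolding Jstar_def using objective_le[OF D Sh _ g] by (intro SUP_least) auto
  let ?S = "g\<^sup>2 *\<^sub>R (matrix_inv (g *\<^sub>R mat 1 - D) ** Shat ** matrix_inv (g *\<^sub>R mat 1 - D))"
  have "ereal (objective D Shat g ?S) \<le> Jstar D Shat g"
    unfolding Jstar_def using attain(1)[OF D Sh g] by (intro SUP_upper) auto
  then show "ereal (closed_form D Shat g) \<le> Jstar D Shat g"
    using attain(2)[OF D Sh g] by simp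
qed

lemma transpose_diff: "transpose ((A::real^'n^'n) - B) = transpose A - transpose B"
  by (simp add: transpose_def vec_eq_iff)

lemma trace_zero_pd:
  fixes N A :: "real^'n^'n"
  assumes A: "pd A" and t: "trace (N ** A ** transpose N) = 0"
  shows "N = 0"
proof -
  obtain B a where B: "onb B" "\<And>v. v \<in> B \<Longrightarrow> A *v v = a v *\<^sub>R v" "\<And>v. v \<in> B \<Longrightarrow> a v \<ge> 0"
    using psd_spectral[OF pd_psd[OF A]] by metis
  have apos: "a v > 0" if "v \<in> B" for v
  proof -
    have "v \<noteq> 0" using B(1) that by (auto simp: onb_def)
    then have "0 < v \<bullet> (A *v v)" by (rule pd_form[OF A])
    also have "\<dots> = a v" using B(2)[OF that] onb_inner[OF B(1) that that] by simp
    finally show ?thesis .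
  qed
  have "trace (N ** A ** transpose N) = trace (transpose N ** N ** A)" by (rule trace_cyc)
  also have "\<dots> = (\<Sum>v\<in>B. v \<bullet> ((transpose N ** N ** A) *v v))" by (rule trace_onb[OF B(1)])
  also have "\<dots> = (\<Sum>v\<in>B. a v * ((N *v v) \<bullet> (N *v v)))"
  proof (rule sum.cong[OF refl])
    fix v assume v: "v \<in> B"
    have "v \<bullet> ((transpose N ** N ** A) *v v) = a v * (v \<bullet> (transpose N *v (N *v v)))"
      by (simp add: mv3 B(2)[OF v] matrix_vector_mult_scaleR)
    also have "v \<bullet> (transpose N *v (N *v v)) = (N *v v) \<bullet> (N *v v)"
      using dot_transpose[of v "transpose N" "N *v v"] by simp
    finally show "v \<bullet> ((transpose N ** N ** A) *v v) = a v * ((N *v v) \<bullet> (N *v v))" .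
  qed
  finally have s0: "(\<Sum>v\<in>B. a v * ((N *v v) \<bullet> (N *v v))) = 0" using t by simp
  have nn: "\<And>v. v \<in> B \<Longrightarrow> 0 \<le> a v * ((N *v v) \<bullet> (N *v v))"
    using apos by (simp add: less_imp_le)
  have "\<forall>v\<in>B. a v * ((N *v v) \<bullet> (N *v v)) = 0"
    using sum_nonneg_eq_0_iff[of B "\<lambda>v. a v * ((N *v v) \<bullet> (N *v v))"] nn s0 onb_finite[OF B(1)]
    by blast
  then have "N *v v = 0 *v v" if "v \<in> B" for v using apos[OF that] that by auto
  then show ?thesis by (rule matrix_eq_onb[OF B(1)])
qed

lemma uniqueness:
  fixes D Shat S :: "real^'n^'n"
  assumes D: "symmetric_mat D" and Sh: "pd Shat" and g: "g > lambda_max D" "g \<ge> 0"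
    and S: "psd S" and opt: "objective D Shat g S = closed_form D Shat g"
  shows "S = g\<^sup>2 *\<^sub>R (matrix_inv (g *\<^sub>R mat 1 - D) ** Shat ** matrix_inv (g *\<^sub>R mat 1 - D))"
proof -
  define A where "A = g *\<^sub>R mat 1 - D"
  have Apd: "pd A" unfolding A_def by (rule shift_pd[OF D g(1)])
  have IA: "invertible A" by (rule pd_invertible[OF Apd])
  define M where "M = matrix_inv A"
  have MS: "symmetric_mat M" unfolding M_def by (rule sym_inv[OF _ IA]) (use Apd in \<open>simp add: pd_def\<close>)
  have AM: "A *v (M *v z) = z" "M *v (A *v z) = z" for z
    unfolding M_def using matrix_inv_vec[OF IA] by auto
  have Shpsd: "psd Shat" by (rule pd_psd[OF Sh])
  define R where "R = psd_sqrt Shat"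
  have R: "psd R" "R ** R = Shat" using psd_sqrt_props[OF Shpsd] by (auto simp: R_def)
  have RS: "symmetric_mat R" using R by (simp add: psd_def)
  have IR: "invertible R"
  proof -
    have "\<forall>x. R *v x = 0 \<longrightarrow> x = 0"
    proof (intro allI impI)
      fix x assume "R *v x = 0"
      then have "Shat *v x = 0" using R(2) by (metis matrix_vector_mul_assoc matrix_vector_mult_0_right)
      then have "x \<bullet> (Shat *v x) = 0" by simp
      then show "x = 0" using pd_form[OF Sh, of x] by (cases "x = 0") auto
    qed
    then show ?thesis by (metis matrix_left_invertible_ker invertible_left_inverse)
  qed
  define Ri where "Ri = matrix_inv R"
  have RiS: "symmetric_mat Ri" unfolding Ri_def by (rule sym_inv[OF RS IR])
  have RRi: "R *v (Ri *v z) = z" "Ri *v (R *v z) = z" for z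
    unfolding Ri_def using matrix_inv_vec[OF IR] by auto
  define X where "X = psd_sqrt (R ** S ** R)"
  have T: "psd (R ** S ** R)" by (rule psd_congr[OF S RS])
  have X: "psd X" "X ** X = R ** S ** R" using psd_sqrt_props[OF T] by (auto simp: X_def)
  have XS: "symmetric_mat X" using X by (simp add: psd_def)
  have XX: "X *v (X *v z) = R *v (S *v (R *v z))" for z
    using X(2) by (metis matrix_vector_mul_assoc)
  define Z where "Z = X ** Ri"
  have tZ: "transpose Z = Ri ** X"
    using XS RiS by (simp add: Z_def matrix_transpose_mul symmetric_mat_def)
  have ZtZ: "transpose Z ** Z = S"
  proof (subst matrix_eq, intro allI)
    fix z
    show "(transpose Z ** Z) *v z = S *v z"
      unfolding tZ unfolding Z_def by (simp add: matrix_vector_mul_assoc[symmetric] XX RRi)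
  qed
  have ZR: "Z ** R = X"
    by (subst matrix_eq) (simp add: Z_def matrix_vector_mul_assoc[symmetric] RRi)
  define N where "N = Z - g *\<^sub>R (R ** M)"
  have tRM: "transpose (R ** M) = M ** R"
    using RS MS by (simp add: matrix_transpose_mul symmetric_mat_def)
  have tN: "transpose N = Ri ** X - g *\<^sub>R (M ** R)"
    by (simp add: N_def transpose_diff transpose_scalar tRM tZ)
  have expand: "N ** A ** transpose N = Z ** A ** (Ri ** X) - g *\<^sub>R (Z ** R)
      - g *\<^sub>R (R ** (Ri ** X)) + (g * g) *\<^sub>R (R ** M ** R)"
  proof (subst matrix_eq, intro allI)
    fix z
    show "(N ** A ** transpose N) *v z = (Z ** A ** (Ri ** X) - g *\<^sub>R (Z ** R)
      - g *\<^sub>R (R ** (Ri ** X)) + (g * g) *\<^sub>R (R ** M ** R)) *v z"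
      unfolding tN by (simp add: N_def matrix_vector_mul_assoc[symmetric] matrix_vector_mult_diff_rdistrib
          matrix_vector_mult_add_rdistrib matrix_vector_mult_diff_distrib scale_mv
          matrix_vector_mult_scaleR AM algebra_simps)
  qed
  have tr1: "trace (Z ** A ** (Ri ** X)) = trace (A ** S)"
    using trace_cyc[of Z A "transpose Z"] ZtZ trace_mul_sym[of S A] tZ by (simp add: matrix_mul_assoc)
  have tr2: "trace (R ** (Ri ** X)) = trace X"
  proof -
    have "R ** (Ri ** X) = transpose (Z ** R)" unfolding tZ[symmetric]
      using RS by (simp add: matrix_transpose_mul symmetric_mat_def)
    then show ?thesis using ZR by (simp add: trace_transpose)
  qed
  have tr3: "trace (R ** M ** R) = trace (M ** Shat)"
    using trace_cyc[of R M R] R(2) trace_mul_sym[of Shat M] by (simp add: matrix_mul_assoc)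
  have "trace (N ** A ** transpose N) = trace (A ** S) - 2 * g * trace X + g^2 * trace (M ** Shat)"
    unfolding expand trace_add trace_sub trace_scaleR tr1 tr2 tr3 ZR by (simp add: power2_eq_square)
  also have "\<dots> = 0"
  proof -
    have "objective D Shat g S = 2 * g * trace X - trace (A ** S)"
      using objective_eq2[OF D] by (simp add: X_def R_def A_def)
    moreover have "closed_form D Shat g = g^2 * trace (M ** Shat)"
      using closed_form_eq[OF D] IA by (simp add: A_def M_def)
    ultimately show ?thesis using opt by simp
  qed
  finally have "N = 0" by (rule trace_zero_pd[OF Apd])
  then have Zeq: "Z = g *\<^sub>R (R ** M)" by (simp add: N_def)
  have "S = transpose Z ** Z" using ZtZ by simp
  also have "\<dots> = g\<^sup>2 *\<^sub>R (M ** Shat ** M)"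
    unfolding Zeq transpose_scalar tRM R(2)[symmetric]
    by (simp add: matrix_scalar_ac scalar_matrix_assoc[symmetric] matrix_mul_assoc power2_eq_square)
  finally show ?thesis by (simp add: M_def A_def)
qed

lemma trace_rank1: "trace ((P::real^'n^'n) ** osum {u} (\<lambda>_. t)) = t * (u \<bullet> (P *v u))"
proof -
  obtain B :: "(real^'n) set" where B: "onb B" using exists_onb by blast
  have "trace (P ** osum {u} (\<lambda>_. t)) = (\<Sum>v\<in>B. v \<bullet> ((P ** osum {u} (\<lambda>_. t)) *v v))"
    by (rule trace_onb[OF B])
  also have "\<dots> = (\<Sum>v\<in>B. t * ((u \<bullet> v) * ((P *v u) \<bullet> v)))"
    by (simp add: matrix_vector_mul_assoc[symmetric] osum_mult matrix_vector_mult_scaleR inner_commute mult.assoc)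
  also have "\<dots> = t * (u \<bullet> (P *v u))"
    by (simp add: sum_distrib_left[symmetric] parseval[OF B, symmetric])
  finally show ?thesis .
qed

lemma psd_rank1: "t \<ge> 0 \<Longrightarrow> psd (osum {u} (\<lambda>_. t))"
  unfolding psd_def by (simp add: osum_sym osum_form mult.assoc)

lemma objective_lower:
  fixes D Shat S :: "real^'n^'n"
  assumes D: "symmetric_mat D" and Sh: "psd Shat" and S: "psd S" and g: "g \<ge> 0"
  shows "objective D Shat g S \<ge> trace (D ** S) - g * trace S"
proof -
  have RS: "symmetric_mat (psd_sqrt Shat)" using psd_sqrt_props(1)[OF Sh] by (simp add: psd_def)
  have "psd (psd_sqrt Shat ** S ** psd_sqrt Shat)" by (rule psd_congr[OF S RS])
  then have "trace (psd_sqrt (psd_sqrt Shat ** S ** psd_sqrt Shat)) \<ge> 0"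
    by (intro psd_trace_nonneg psd_sqrt_props(1))
  then show ?thesis unfolding objective_eq[OF D] using g by simp
qed

lemma below_case:
  fixes D Shat :: "real^'n^'n"
  assumes D: "symmetric_mat D" and Sh: "psd Shat" and g: "g \<ge> 0" "g < lambda_max D"
  shows "Jstar D Shat g = \<infinity>"
proof -
  obtain B l where B: "onb B" and E: "\<And>v. v \<in> B \<Longrightarrow> D *v v = l v *\<^sub>R v"
    using sym_spectral[OF D] by metis
  obtain u where u: "u \<in> B" "l u = lambda_max D" using lambda_max_props(2)[OF D B E] by blast
  have uu: "u \<bullet> u = 1" using onb_inner[OF B u(1) u(1)] by simp
  have low: "ereal (t * (lambda_max D - g)) \<le> Jstar D Shat g" if t: "t \<ge> 0" for t
  proof -
    let ?S = "osum {u} (\<lambda>_. t)"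
    have S: "psd ?S" by (rule psd_rank1[OF t])
    have "trace (D ** ?S) = t * lambda_max D" using E[OF u(1)] u(2) uu by (simp add: trace_rank1)
    moreover have "trace ?S = t" using trace_rank1[of "mat 1" u t] uu by simp
    ultimately have "t * (lambda_max D - g) \<le> objective D Shat g ?S"
      using objective_lower[OF D Sh S g(1)] by (simp add: algebra_simps)
    also have "ereal (objective D Shat g ?S) \<le> Jstar D Shat g"
      unfolding Jstar_def using S by (intro SUP_upper) auto
    finally show ?thesis by simp
  qed
  show ?thesis
  proof (rule ereal_top)
    fix r :: real
    define t where "t = \<bar>r\<bar> / (lambda_max D - g)"
    have t0: "t \<ge> 0" using g by (simp add: t_def)
    have "t * (lambda_max D - g) = \<bar>r\<bar>" using g by (simp add: t_def)
    then have "ereal r \<le> ereal (t * (lambda_max D - g))" by simp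
    also have "\<dots> \<le> Jstar D Shat g" by (rule low[OF t0])
    finally show "ereal r \<le> Jstar D Shat g" .
  qed
qed

lemma objective_shift:
  fixes D Shat S :: "real^'n^'n"
  assumes D: "symmetric_mat D"
  shows "objective D Shat a S = objective D Shat b S
     + (b - a) * (trace S - 2 * trace (psd_sqrt (psd_sqrt Shat ** S ** psd_sqrt Shat)))"
  unfolding objective_eq[OF D] by (simp add: algebra_simps)

lemma f_formula:
  fixes D Shat :: "real^'n^'n"
  assumes D: "symmetric_mat D" and B: "onb B" and E: "\<And>v. v \<in> B \<Longrightarrow> D *v v = l v *\<^sub>R v"
    and g: "g > lambda_max D"
  shows "closed_form D Shat g = (\<Sum>v\<in>B. g^2 * ((v \<bullet> (Shat *v v)) / (g - l v)))"
proof -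
  define A where "A = g *\<^sub>R mat 1 - D"
  have Apd: "pd A" unfolding A_def by (rule shift_pd[OF D g])
  have IA: "invertible A" by (rule pd_invertible[OF Apd])
  define M where "M = matrix_inv A"
  have MS: "symmetric_mat M" unfolding M_def by (rule sym_inv[OF _ IA]) (use Apd in \<open>simp add: pd_def\<close>)
  have Mv: "M *v v = (1 / (g - l v)) *\<^sub>R v" if v: "v \<in> B" for v
  proof -
    have lv: "l v < g" using lambda_max_props(3)[OF D B E v] g by simp
    have Av: "A *v v = (g - l v) *\<^sub>R v" unfolding A_def shift_mult E[OF v] by (simp add: scaleR_diff_left)
    have "A *v ((1 / (g - l v)) *\<^sub>R v) = v"
      using lv by (simp add: matrix_vector_mult_scaleR Av)
    then have "M *v v = M *v (A *v ((1 / (g - l v)) *\<^sub>R v))" by simp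
    also have "\<dots> = (1 / (g - l v)) *\<^sub>R v" unfolding M_def by (rule matrix_inv_vec(2)[OF IA])
    finally show ?thesis .
  qed
  have "closed_form D Shat g = g^2 * trace (M ** Shat)"
    using closed_form_eq[OF D] IA by (simp add: A_def M_def)
  also have "trace (M ** Shat) = (\<Sum>v\<in>B. v \<bullet> ((M ** Shat) *v v))" by (rule trace_onb[OF B])
  also have "\<dots> = (\<Sum>v\<in>B. (v \<bullet> (Shat *v v)) / (g - l v))"
  proof (rule sum.cong[OF refl])
    fix v assume v: "v \<in> B"
    have "v \<bullet> ((M ** Shat) *v v) = (M *v v) \<bullet> (Shat *v v)"
      by (simp add: matrix_vector_mul_assoc[symmetric] sym_dot[OF MS])
    also have "\<dots> = (v \<bullet> (Shat *v v)) / (g - l v)" by (simp add: Mv[OF v])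
    finally show "v \<bullet> ((M ** Shat) *v v) = (v \<bullet> (Shat *v v)) / (g - l v)" .
  qed
  finally show ?thesis by (simp add: sum_distrib_left)
qed

lemma objective_zero: "objective D Shat 0 0 = 0"
  by (simp add: objective_def frob_inner_def trace_def)

lemma top_case:
  fixes D Shat :: "real^'n^'n"
  assumes D: "symmetric_mat D" and Sh: "psd Shat" and v: "D *v v = g *\<^sub>R v" "v \<bullet> v = 1"
    and s: "v \<bullet> (Shat *v v) > 0" and g: "g > 0"
  shows "Jstar D Shat g = \<infinity>"
proof -
  define R where "R = psd_sqrt Shat"
  have R: "psd R" "R ** R = Shat" using psd_sqrt_props[OF Sh] by (auto simp: R_def)
  have RS: "symmetric_mat R" using R by (simp add: psd_def)
  define w where "w = R *v v"
  have ww: "w \<bullet> w = v \<bullet> (Shat *v v)"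
    unfolding w_def using sym_dot[OF RS, of v "R *v v"] R(2) by (simp add: matrix_vector_mul_assoc)
  have wpos: "norm w > 0" using ww s by (simp add: norm_eq_sqrt_inner)
  have low: "ereal (2 * g * sqrt t * norm w) \<le> Jstar D Shat g" if t: "t \<ge> 0" for t
  proof -
    let ?S = "osum {v} (\<lambda>_. t)"
    have S: "psd ?S" by (rule psd_rank1[OF t])
    define c where "c = sqrt t / norm w"
    have c0: "c \<ge> 0" using t wpos by (simp add: c_def)
    have RSR: "R ** ?S ** R = osum {w} (\<lambda>_. c) ** osum {w} (\<lambda>_. c)"
    proof (subst matrix_eq, intro allI)
      fix z
      have vz: "v \<bullet> (R *v z) = w \<bullet> z" unfolding w_def by (rule sym_dot[OF RS])
      have "(R ** ?S ** R) *v z = R *v ((t * (v \<bullet> (R *v z))) *\<^sub>R v)"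
        unfolding mv3 by (simp add: osum_mult)
      also have "\<dots> = (t * (w \<bullet> z)) *\<^sub>R w"
        by (simp add: matrix_vector_mult_scaleR vz w_def)
      also have "\<dots> = ((c * c * (w \<bullet> w)) * (w \<bullet> z)) *\<^sub>R w"
      proof -
        have nw: "norm w * norm w = w \<bullet> w" by (simp add: dot_square_norm power2_eq_square)
        have "c * c * (w \<bullet> w) = (sqrt t * sqrt t) / (norm w * norm w) * (w \<bullet> w)"
          by (simp add: c_def)
        also have "\<dots> = t" using t wpos nw by simp
        finally show ?thesis by simp
      qed
      also have "\<dots> = (osum {w} (\<lambda>_. c) ** osum {w} (\<lambda>_. c)) *v z"
        by (simp add: matrix_vector_mul_assoc[symmetric] osum_mult)
      finally show "(R ** ?S ** R) *v z = (osum {w} (\<lambda>_. c) ** osum {w} (\<lambda>_. c)) *v z" .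
    qed
    have X: "psd_sqrt (R ** ?S ** R) = osum {w} (\<lambda>_. c)"
      by (rule psd_sqrt_eq[OF psd_rank1[OF c0] RSR[symmetric]])
    have trX: "trace (osum {w} (\<lambda>_. c)) = sqrt t * norm w"
      using trace_rank1[of "mat 1" w c] wpos by (simp add: c_def dot_square_norm power2_eq_square)
    have trD: "trace (D ** ?S) = t * g" using v trace_rank1[of D v t] by simp
    have trS: "trace ?S = t" using trace_rank1[of "mat 1" v t] v by simp
    have "objective D Shat g ?S = 2 * g * sqrt t * norm w"
      unfolding objective_eq[OF D] R_def[symmetric] X trX trD trS by simp
    moreover have "ereal (objective D Shat g ?S) \<le> Jstar D Shat g"
      unfolding Jstar_def using S by (intro SUP_upper) auto
    ultimately show ?thesis by simp
  qed
  show ?thesis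
  proof (rule ereal_top)
    fix r :: real
    define t where "t = (\<bar>r\<bar> / (2 * g * norm w))^2"
    have t0: "t \<ge> 0" by (simp add: t_def)
    have "sqrt t = \<bar>r\<bar> / (2 * g * norm w)" using g wpos by (simp add: t_def)
    then have "2 * g * sqrt t * norm w = \<bar>r\<bar>" using g wpos by simp
    then have "ereal r \<le> ereal (2 * g * sqrt t * norm w)" by simp
    also have "\<dots> \<le> Jstar D Shat g" by (rule low[OF t0])
    finally show "ereal r \<le> Jstar D Shat g" .
  qed
qed

lemma boundary_le:
  fixes D Shat :: "real^'n^'n"
  assumes D: "symmetric_mat D" and Sh: "psd Shat" and g: "g = lambda_max D" "g \<ge> 0"
  shows "Jstar D Shat g \<le> Liminf (at_right g) (\<lambda>h. ereal (closed_form D Shat h))"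
  unfolding Jstar_def
proof (rule SUP_least)
  fix S :: "real^'n^'n" assume "S \<in> {S. psd S}"
  then have S: "psd S" by simp
  define c where "c = trace S - 2 * trace (psd_sqrt (psd_sqrt Shat ** S ** psd_sqrt Shat))"
  have ev: "eventually (\<lambda>h. ereal (objective D Shat g S - (h - g) * c) \<le> ereal (closed_form D Shat h)) (at_right g)"
    using eventually_at_right_less[of g]
  proof eventually_elim
    case (elim h)
    have "objective D Shat g S - (h - g) * c = objective D Shat h S"
      using objective_shift[OF D, of Shat g S h] by (simp add: c_def)
    also have "\<dots> \<le> closed_form D Shat h" using objective_le[OF D Sh S] elim g by simp
    finally show ?case by simp
  qed
  have lim: "((\<lambda>h. ereal (objective D Shat g S - (h - g) * c)) \<longlongrightarrow> ereal (objective D Shat g S)) (at_right g)"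
  proof -
    have "((\<lambda>h. objective D Shat g S - (h - g) * c) \<longlongrightarrow> objective D Shat g S - (g - g) * c) (at_right g)"
      by (intro tendsto_intros)
    then show ?thesis by (intro tendsto_ereal) simp
  qed
  have "ereal (objective D Shat g S) = Liminf (at_right g) (\<lambda>h. ereal (objective D Shat g S - (h - g) * c))"
    by (rule lim_imp_Liminf[OF trivial_limit_at_right_real lim, symmetric])
  also have "\<dots> \<le> Liminf (at_right g) (\<lambda>h. ereal (closed_form D Shat h))"
    by (rule Liminf_mono[OF ev])
  finally show "ereal (objective D Shat g S) \<le> Liminf (at_right g) (\<lambda>h. ereal (closed_form D Shat h))" .
qed

lemma sstar_bound:
  fixes D Shat :: "real^'n^'n"
  assumes D: "symmetric_mat D" and Sh: "psd Shat" and g: "g \<ge> 0" and h: "h > lambda_max D" "h > 0" "h \<ge> g"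
  shows "ereal (closed_form D Shat h - 2 * (h - g) * closed_form D Shat h / h) \<le> Jstar D Shat g"
proof -
  have h0: "h \<ge> 0" using h by simp
  define A where "A = h *\<^sub>R mat 1 - D"
  define M where "M = matrix_inv A"
  define R where "R = psd_sqrt Shat"
  define S where "S = h\<^sup>2 *\<^sub>R (M ** Shat ** M)"
  have R: "R ** R = Shat" using psd_sqrt_props[OF Sh] by (auto simp: R_def)
  have S: "psd S" using attain(1)[OF D Sh h(1) h0] by (simp add: S_def M_def A_def)
  have objS: "objective D Shat h S = closed_form D Shat h"
    using attain(2)[OF D Sh h(1) h0] by (simp add: S_def M_def A_def)
  have X: "psd_sqrt (R ** S ** R) = h *\<^sub>R (R ** M ** R)"
    using attain(3)[OF D Sh h(1) h0] by (simp add: S_def M_def A_def R_def)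
  have IA: "invertible A" unfolding A_def by (rule pd_invertible[OF shift_pd[OF D h(1)]])
  have cf: "closed_form D Shat h = h^2 * trace (R ** M ** R)"
  proof -
    have "trace (R ** M ** R) = trace (M ** Shat)"
      using trace_cyc[of R M R] R trace_mul_sym[of Shat M] by (simp add: matrix_mul_assoc)
    then show ?thesis using closed_form_eq[OF D] IA by (simp add: A_def M_def)
  qed
  have trX: "trace (psd_sqrt (R ** S ** R)) = closed_form D Shat h / h"
    using h by (simp add: X trace_scaleR cf power2_eq_square)
  have trS: "trace S \<ge> 0" by (rule psd_trace_nonneg[OF S])
  have "objective D Shat g S = closed_form D Shat h
      + (h - g) * (trace S - 2 * (closed_form D Shat h / h))"
    using objective_shift[OF D, of Shat g S h] objS trX by (simp add: R_def)
  then have obj: "objective D Shat g S = closed_form D Shat h - 2 * (h - g) * closed_form D Shat h / h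
      + (h - g) * trace S" by (simp add: algebra_simps)
  have "(h - g) * trace S \<ge> 0" using h(3) trS by simp
  then have "closed_form D Shat h - 2 * (h - g) * closed_form D Shat h / h \<le> objective D Shat g S"
    using obj by simp
  also have "ereal (objective D Shat g S) \<le> Jstar D Shat g"
    unfolding Jstar_def using S by (intro SUP_upper) auto
  finally show ?thesis by simp
qed

lemma boundary_ge:
  fixes D Shat :: "real^'n^'n"
  assumes D: "symmetric_mat D" and Sh: "psd Shat" and g: "g = lambda_max D" "g \<ge> 0"
  shows "Liminf (at_right g) (\<lambda>h. ereal (closed_form D Shat h)) \<le> Jstar D Shat g"
proof -
  obtain B l where B: "onb B" and E: "\<And>v. v \<in> B \<Longrightarrow> D *v v = l v *\<^sub>R v"
    using sym_spectral[OF D] by metis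
  define s where "s v = v \<bullet> (Shat *v v)" for v
  have s0: "s v \<ge> 0" for v unfolding s_def by (rule psd_form[OF Sh])
  have lv: "l v \<le> g" if "v \<in> B" for v using lambda_max_props(3)[OF D B E that] g by simp
  show ?thesis
  proof (cases "\<exists>v\<in>B. l v = g \<and> s v > 0 \<and> g > 0")
    case True
    then obtain v where v: "v \<in> B" "l v = g" "s v > 0" "g > 0" by blast
    have "Jstar D Shat g = \<infinity>"
      by (rule top_case[OF D Sh _ _ _ v(4)]) (use E[OF v(1)] v onb_inner[OF B v(1) v(1)] in \<open>auto simp: s_def\<close>)
    then show ?thesis by simp
  next
    case False
    define L where "L = (\<Sum>v\<in>B. if l v < g then g^2 * (s v / (g - l v)) else 0)"
    have trm: "((\<lambda>h. h^2 * (s v / (h - l v))) \<longlongrightarrow> (if l v < g then g^2 * (s v / (g - l v)) else 0)) (at_right g)"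
      if v: "v \<in> B" for v
    proof (cases "l v < g")
      case True
      then show ?thesis by (simp, intro tendsto_intros) auto
    next
      case False
      then have lg: "l v = g" using lv[OF v] by simp
      then have "s v = 0 \<or> g = 0" using \<open>\<not> (\<exists>v\<in>B. l v = g \<and> s v > 0 \<and> g > 0)\<close> v s0[of v] g(2) by force
      then show ?thesis
      proof
        assume "s v = 0" then show ?thesis using False by simp
      next
        assume g0: "g = 0"
        have "((\<lambda>h. h * s v) \<longlongrightarrow> 0 * s v) (at_right g)" by (intro tendsto_intros) (simp add: g0)
        moreover have "eventually (\<lambda>h. h * s v = h^2 * (s v / (h - l v))) (at_right g)"
          using eventually_at_right_less[of g]
          by eventually_elim (simp add: lg g0 power2_eq_square)
        ultimately show ?thesis using False by (simp add: Lim_transform_eventually)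
      qed
    qed
    have lim: "((\<lambda>h. closed_form D Shat h) \<longlongrightarrow> L) (at_right g)"
    proof -
      have "((\<lambda>h. \<Sum>v\<in>B. h^2 * (s v / (h - l v))) \<longlongrightarrow> L) (at_right g)"
        unfolding L_def by (rule tendsto_sum) (rule trm)
      moreover have "eventually (\<lambda>h. (\<Sum>v\<in>B. h^2 * (s v / (h - l v))) = closed_form D Shat h) (at_right g)"
        using eventually_at_right_less[of g]
        by eventually_elim (simp add: f_formula[OF D B E] g s_def)
      ultimately show ?thesis by (rule Lim_transform_eventually)
    qed
    have "Liminf (at_right g) (\<lambda>h. ereal (closed_form D Shat h)) = ereal L"
      by (rule lim_imp_Liminf[OF trivial_limit_at_right_real tendsto_ereal[OF lim]])
    also have "ereal L \<le> Jstar D Shat g"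
    proof (cases "g = 0")
      case True
      have "L = 0" unfolding L_def by (rule sum.neutral) (simp add: True)
      moreover have "ereal (objective D Shat 0 0) \<le> Jstar D Shat 0"
        unfolding Jstar_def by (intro SUP_upper) (simp add: psd_def symmetric_mat_def transpose_def vec_eq_iff)
      ultimately show ?thesis using True by (simp add: objective_zero)
    next
      case False
      then have gp: "g > 0" using g(2) by simp
      have "((\<lambda>h. closed_form D Shat h - 2 * (h - g) * closed_form D Shat h / h) \<longlongrightarrow> L - 2 * (g - g) * L / g) (at_right g)"
        by (intro tendsto_intros lim) (use gp in auto)
      then have lim2: "((\<lambda>h. ereal (closed_form D Shat h - 2 * (h - g) * closed_form D Shat h / h)) \<longlongrightarrow> ereal L) (at_right g)"
        by (intro tendsto_ereal) simp
      have ev: "eventually (\<lambda>h. ereal (closed_form D Shat h - 2 * (h - g) * closed_form D Shat h / h) \<le> Jstar D Shat g) (at_right g)"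
        using eventually_at_right_less[of g]
      proof eventually_elim
        case (elim h)
        show ?case by (rule sstar_bound[OF D Sh g(2)]) (use elim g gp in auto)
      qed
      show ?thesis by (rule tendsto_upperbound[OF lim2 ev trivial_limit_at_right_real])
    qed
    finally show ?thesis .
  qed
qed

theorem mainTheorem17:
  fixes D Shat :: "real^'n^'n" and \<gamma> :: real
  assumes "symmetric_mat D" and "psd Shat" and "0 \<le> \<gamma>"
  shows "(\<gamma> > lambda_max D \<longrightarrow> Jstar D Shat \<gamma> = ereal (closed_form D Shat \<gamma>))
       \<and> (\<gamma> = lambda_max D \<longrightarrow>
            Jstar D Shat \<gamma> = Liminf (at_right \<gamma>) (\<lambda>g. ereal (closed_form D Shat g)))
       \<and> (\<gamma> < lambda_max D \<longrightarrow> Jstar D Shat \<gamma> = \<infinity>)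
       \<and> (\<gamma> > lambda_max D \<longrightarrow>
            (let Sstar = \<gamma>\<^sup>2 *\<^sub>R (matrix_inv (\<gamma> *\<^sub>R mat 1 - D) ** Shat
                                   ** matrix_inv (\<gamma> *\<^sub>R mat 1 - D))
             in psd Sstar \<and> ereal (objective D Shat \<gamma> Sstar) = Jstar D Shat \<gamma>
                \<and> (pd Shat \<longrightarrow>
                     (\<forall>S. psd S \<and> ereal (objective D Shat \<gamma> S) = Jstar D Shat \<gamma>
                          \<longrightarrow> S = Sstar))))"
proof (intro conjI impI)
  note D = assms(1) and Sh = assms(2) and g0 = assms(3)
  show "\<gamma> > lambda_max D \<Longrightarrow> Jstar D Shat \<gamma> = ereal (closed_form D Shat \<gamma>)"
    by (rule Jstar_above[OF D Sh _ g0])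
  show "\<gamma> = lambda_max D \<Longrightarrow> Jstar D Shat \<gamma> = Liminf (at_right \<gamma>) (\<lambda>g. ereal (closed_form D Shat g))"
    by (rule antisym[OF boundary_le[OF D Sh _ g0] boundary_ge[OF D Sh _ g0]])
  show "\<gamma> < lambda_max D \<Longrightarrow> Jstar D Shat \<gamma> = \<infinity>"
    by (rule below_case[OF D Sh g0])
  assume gt: "\<gamma> > lambda_max D"
  have J: "Jstar D Shat \<gamma> = ereal (closed_form D Shat \<gamma>)" by (rule Jstar_above[OF D Sh gt g0])
  show "let Sstar = \<gamma>\<^sup>2 *\<^sub>R (matrix_inv (\<gamma> *\<^sub>R mat 1 - D) ** Shat ** matrix_inv (\<gamma> *\<^sub>R mat 1 - D))
             in psd Sstar \<and> ereal (objective D Shat \<gamma> Sstar) = Jstar D Shat \<gamma>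
                \<and> (pd Shat \<longrightarrow>
                     (\<forall>S. psd S \<and> ereal (objective D Shat \<gamma> S) = Jstar D Shat \<gamma>
                          \<longrightarrow> S = Sstar))"
    unfolding Let_def
  proof (intro conjI impI allI)
    show "psd (\<gamma>\<^sup>2 *\<^sub>R (matrix_inv (\<gamma> *\<^sub>R mat 1 - D) ** Shat ** matrix_inv (\<gamma> *\<^sub>R mat 1 - D)))"
      by (rule attain(1)[OF D Sh gt g0])
    show "ereal (objective D Shat \<gamma> (\<gamma>\<^sup>2 *\<^sub>R (matrix_inv (\<gamma> *\<^sub>R mat 1 - D) ** Shat ** matrix_inv (\<gamma> *\<^sub>R mat 1 - D))))
        = Jstar D Shat \<gamma>"
      using attain(2)[OF D Sh gt g0] J by simp
    fix S assume pd: "pd Shat" and S: "psd S \<and> ereal (objective D Shat \<gamma> S) = Jstar D Shat \<gamma>"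
    then have "objective D Shat \<gamma> S = closed_form D Shat \<gamma>" using J by simp
    then show "S = \<gamma>\<^sup>2 *\<^sub>R (matrix_inv (\<gamma> *\<^sub>R mat 1 - D) ** Shat ** matrix_inv (\<gamma> *\<^sub>R mat 1 - D))"
      using uniqueness[OF D pd gt g0] S by blast
  qed
qed

end
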